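(* Let $0<\mu<1/2$ be such that for every $r>0$ the spiral $t\mapsto(r\cos t,r\sin t,\mu rt)$ is self-expanded, fix $r>0$ and let $\gamma(t)=(r\cos t,r\sin t,\mu rt)$, $t\in\mathbb{R}$. Let $\lambda=1/\sqrt5$ and $\alpha=\arccos(\lambda)$. Then for every $t\in\mathbb{R}$ the cone $C(t,\alpha)$ does not intersect the line $\{(0,0,z):z\in\mathbb{R}\}$.
   Context: $\mathbb{R}^3$ carries the Euclidean inner product $\langle\cdot,\cdot\rangle$ and norm $\|\cdot\|$. A curve is self-expanded if for all $t_1\le t_2\le t_3$: $\|\gamma(t_1)-\gamma(t_2)\|\le\|\gamma(t_1)-\gamma(t_3)\|$. For $v\in\mathbb{S}^2$ and $\alpha\in[0,\pi)$, $C(v,\alpha)=\{u:\langle u,v\rangle>\|u\|\cos\alpha\}\cup\{0\}$, and $C(t,\alpha)=\gamma(t)+C\big(\gamma'(t)/\|\gamma'(t)\|,\alpha\big)$. *)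

theory Defs
  imports "HOL-Analysis.Analysis"
begin

definition self_expanded :: "(real \<Rightarrow> real^3) \<Rightarrow> bool" where
  "self_expanded \<gamma> \<longleftrightarrow>
     (\<forall>t1 t2 t3. t1 \<le> t2 \<longrightarrow> t2 \<le> t3 \<longrightarrow>
        norm (\<gamma> t1 - \<gamma> t2) \<le> norm (\<gamma> t1 - \<gamma> t3))"

definition cone_dir :: "real^3 \<Rightarrow> real \<Rightarrow> (real^3) set" where
  "cone_dir v \<alpha> = {u. inner u v > norm u * cos \<alpha>} \<union> {0}"

definition cone_at :: "(real \<Rightarrow> real^3) \<Rightarrow> real \<Rightarrow> real \<Rightarrow> (real^3) set" where
  "cone_at \<gamma> t \<alpha> =
     (\<lambda>u. \<gamma> t + u) ` cone_dir (vector_derivative \<gamma> (at t) /\<^sub>R norm (vector_derivative \<gamma> (at t))) \<alpha>"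

definition spiral :: "real \<Rightarrow> real \<Rightarrow> real \<Rightarrow> real^3" where
  "spiral r \<mu> t = vector [r * cos t, r * sin t, \<mu> * r * t]"

end

theory Submission
  imports Defs
begin

lemma spiral_eq: "spiral r \<mu> = (\<lambda>t. (r * cos t) *\<^sub>R vector [1,0,0] + (r * sin t) *\<^sub>R vector [0,1,0]
   + (\<mu> * r * t) *\<^sub>R (vector [0,0,1] :: real^3))"
  unfolding spiral_def by (rule ext) (simp add: vec_eq_iff forall_3)

lemma spiral_deriv: "(spiral r \<mu> has_vector_derivative
   (vector [- r * sin t, r * cos t, \<mu> * r] :: real^3)) (at t)"
proof -
  have "((\<lambda>t. (r * cos t) *\<^sub>R vector [1,0,0] + (r * sin t) *\<^sub>R vector [0,1,0]
   + (\<mu> * r * t) *\<^sub>R (vector [0,0,1] :: real^3)) has_vector_derivative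
    ((- r * sin t) *\<^sub>R vector [1,0,0] + (r * cos t) *\<^sub>R vector [0,1,0]
   + (\<mu> * r) *\<^sub>R (vector [0,0,1] :: real^3))) (at t)"
    by (auto intro!: derivative_eq_intros simp: vec_eq_iff forall_3)
  moreover have "((- r * sin t) *\<^sub>R vector [1,0,0] + (r * cos t) *\<^sub>R vector [0,1,0]
   + (\<mu> * r) *\<^sub>R (vector [0,0,1] :: real^3)) = vector [- r * sin t, r * cos t, \<mu> * r]"
    by (simp add: vec_eq_iff forall_3)
  ultimately show ?thesis by (simp add: spiral_eq)
qed

theorem lemma4p5:
  fixes \<mu> r :: real
  assumes "0 < \<mu>" and "\<mu> < 1/2"
    and "\<forall>s>0. self_expanded (spiral s \<mu>)"
    and "r > 0"
  shows "\<forall>t. cone_at (spiral r \<mu>) t (arccos (1 / sqrt 5))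
               \<inter> {vector [0, 0, z] | z. z \<in> (UNIV :: real set)} = {}"
proof (intro allI)
  fix t
  have cosa: "cos (arccos (1 / sqrt 5)) = 1 / sqrt 5"
    by (rule cos_arccos) (auto simp: field_simps intro: order_trans[of _ 0])
  define d :: "real^3" where "d = vector [- r * sin t, r * cos t, \<mu> * r]"
  have vd: "vector_derivative (spiral r \<mu>) (at t) = d"
    unfolding d_def by (rule vector_derivative_at[OF spiral_deriv])
  have nd: "norm d = r * sqrt (1 + \<mu>^2)"
  proof -
    have h: "(r * cos t)^2 + (r * sin t)^2 = r^2" by (simp add: power_mult_distrib flip: distrib_left)
    have "norm d = sqrt ((r * cos t)^2 + (r * sin t)^2 + (\<mu>*r)^2)"
      by (simp add: d_def norm_eq_sqrt_inner inner_vec_def sum_3 power2_eq_square algebra_simps)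
    also have "\<dots> = sqrt (r^2 * (1 + \<mu>^2))" unfolding h by (simp add: power_mult_distrib ring_distribs)
    also have "\<dots> = r * sqrt (1 + \<mu>^2)" using assms(4) by (simp add: real_sqrt_mult)
    finally show ?thesis .
  qed
  show "cone_at (spiral r \<mu>) t (arccos (1 / sqrt 5))
               \<inter> {vector [0, 0, z] | z. z \<in> (UNIV :: real set)} = {}"
  proof (rule ccontr)
    assume "\<not> ?thesis"
    then obtain u z where u: "u \<in> cone_dir (d /\<^sub>R norm d) (arccos (1 / sqrt 5))"
      and eq: "spiral r \<mu> t + u = vector [0,0,z]"
      unfolding cone_at_def vd by blast
    define w where "w = z - \<mu> * r * t"
    have ueq: "u = vector [- r * cos t, - r * sin t, w]"
      using eq unfolding spiral_def w_def
      by (simp add: vec_eq_iff forall_3 algebra_simps)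
    have "u \<noteq> 0" using assms(4) sin_cos_squared_add[of t] unfolding ueq
      by (auto simp: vec_eq_iff forall_3) (metis sin_cos_squared_add zero_power2 add_0 zero_neq_one)
    hence lt: "inner u (d /\<^sub>R norm d) > norm u * (1 / sqrt 5)"
      using u cosa unfolding cone_dir_def by auto
    have s1: "sqrt (1 + \<mu>^2) > 0" by (simp add: add_pos_nonneg)
    have inn: "inner u (d /\<^sub>R norm d) = \<mu> * w / sqrt (1 + \<mu>^2)"
      using assms(4) s1 unfolding nd
      by (simp add: ueq d_def inner_vec_def sum_3 field_simps)
    have nu: "norm u = sqrt (r^2 + w^2)"
    proof -
      have h: "(r * cos t)^2 + (r * sin t)^2 = r^2" by (simp add: power_mult_distrib flip: distrib_left)
      have "norm u = sqrt ((r * cos t)^2 + (r * sin t)^2 + w^2)"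
        by (simp add: ueq norm_eq_sqrt_inner inner_vec_def sum_3 power2_eq_square algebra_simps)
      thus ?thesis unfolding h .
    qed
    have k: "\<mu> / sqrt (1 + \<mu>^2) \<le> 1 / sqrt 5"
    proof -
      have "\<mu> * sqrt 5 = sqrt (5 * \<mu>^2)" using assms(1) by (simp add: real_sqrt_mult)
      also have "\<dots> \<le> sqrt (1 + \<mu>^2)"
        using power_mono[of \<mu> "1/2" 2] assms(1,2) by (intro real_sqrt_le_mono) (simp add: power_divide)
      finally have "\<mu> * sqrt 5 \<le> sqrt (1 + \<mu>^2)" .
      thus ?thesis using s1 by (simp add: field_simps)
    qed
    have "\<mu> * w / sqrt (1 + \<mu>^2) \<le> \<bar>w\<bar> * (1 / sqrt 5)"
    proof -
      have "\<mu> * w / sqrt (1 + \<mu>^2) \<le> \<bar>w\<bar> * (\<mu> / sqrt (1 + \<mu>^2))"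
        using assms(1) s1 by (simp add: divide_right_mono mult.commute)
      also have "\<dots> \<le> \<bar>w\<bar> * (1 / sqrt 5)" by (rule mult_left_mono[OF k]) simp
      finally show ?thesis .
    qed
    also have "\<bar>w\<bar> \<le> sqrt (r^2 + w^2)"
      by (metis add.commute real_sqrt_abs real_sqrt_le_mono le_add_same_cancel1 zero_le_power2)
    hence "\<bar>w\<bar> * (1 / sqrt 5) \<le> sqrt (r^2 + w^2) * (1 / sqrt 5)"
      by (simp add: divide_right_mono)
    finally show False using lt inn nu by simp
  qed
qed

end
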